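(* Let $(\mathfrak h\oplus\mathfrak h^*,[\cdot,\cdot],[\![\cdot,\cdot,\cdot]\!];\omega_p)$ be a phase space of a Lie-Yamaguti algebra $(\mathfrak h,[\cdot,\cdot]_{\mathfrak h},[\![\cdot,\cdot,\cdot]\!]_{\mathfrak h})$, and let $(\mathfrak h\oplus\mathfrak h^*,*,\{\cdot,\cdot,\cdot\})$ be its compatible pre-Lie-Yamaguti algebra, defined by $\omega_p(X*Y,Z)=-\omega_p(Y,[X,Z])$ and $\omega_p(\{X,Y,Z\},W)=\omega_p(X,[\![W,Z,Y]\!])$ for $X,Y,Z,W\in\mathfrak h\oplus\mathfrak h^*$. Then both $\mathfrak h$ and $\mathfrak h^*$ are closed under $*$ and $\{\cdot,\cdot,\cdot\}$, i.e. $(\mathfrak h,*|_{\mathfrak h},\{\cdot,\cdot,\cdot\}|_{\mathfrak h})$ and $(\mathfrak h^*,*|_{\mathfrak h^*},\{\cdot,\cdot,\cdot\}|_{\mathfrak h^*})$ are subalgebras of the pre-Lie-Yamaguti algebra $(\mathfrak h\oplus\mathfrak h^*,*,\{\cdot,\cdot,\cdot\})$.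
   Context: All vector spaces are over a field of characteristic $0$ and finite-dimensional. A Lie-Yamaguti algebra is a vector space $\mathfrak g$ with a bilinear skew-symmetric $[\cdot,\cdot]$ and a trilinear $[\![\cdot,\cdot,\cdot]\!]$ skew-symmetric in its first two arguments such that for all $x,y,z,w,t$: (1) $[[x,y],z]+[[y,z],x]+[[z,x],y]+[\![x,y,z]\!]+[\![y,z,x]\!]+[\![z,x,y]\!]=0$; (2) $[\![[x,y],z,w]\!]+[\![[y,z],x,w]\!]+[\![[z,x],y,w]\!]=0$; (3) $[\![x,y,[z,w]]\!]=[[\![x,y,z]\!],w]+[z,[\![x,y,w]\!]]$; (4) $[\![x,y,[\![z,w,t]\!]]\!]=[\![[\![x,y,z]\!],w,t]\!]+[\![z,[\![x,y,w]\!],t]\!]+[\![z,w,[\![x,y,t]\!]]\!]$. A symplectic structure on it is a nondegenerate skew-symmetric bilinear form $\omega$ with $\omega(x,[y,z])+\omega(y,[z,x])+\omega(z,[x,y])=0$ and $\omega(z,[\![x,y,w]\!])-\omega(x,[\![w,z,y]\!])+\omega(y,[\![w,z,x]\!])-\omega(w,[\![x,y,z]\!])=0$; for a symplectic Lie-Yamaguti algebra, the two displayed formulas define a pre-Lie-Yamaguti algebra structure whose subadjacent Lie-Yamaguti algebra is the given one (its compatible pre-Lie-Yamaguti algebra). On $\mathfrak h\oplus\mathfrak h^*$, $\omega_p(x+\alpha,y+\beta)=\langle\alpha,y\rangle-\langle\beta,x\rangle$. A phase space of $\mathfrak h$ is a Lie-Yamaguti algebra structure on $\mathfrak h\oplus\mathfrak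 h^*$ for which $\omega_p$ is a symplectic structure and such that $\mathfrak h$ (with its original brackets) and $\mathfrak h^*$ are Lie-Yamaguti subalgebras. A pre-Lie-Yamaguti algebra is a vector space with a bilinear operation $*$ and a trilinear operation $\{\cdot,\cdot,\cdot\}$ satisfying the pre-Lie-Yamaguti axioms; a subalgebra is a subspace closed under both operations. *)

theory Defs
  imports "HOL-Library.Function_Algebras" "HOL-Library.Product_Plus"
begin

definition bilinear_op :: "('k::field \<Rightarrow> 'v::ab_group_add \<Rightarrow> 'v) \<Rightarrow> ('v \<Rightarrow> 'v \<Rightarrow> 'v) \<Rightarrow> bool" where
  "bilinear_op sm B \<longleftrightarrow>
     (\<forall>x y z. B (x + y) z = B x z + B y z) \<and> (\<forall>x y z. B x (y + z) = B x y + B x z) \<and>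
     (\<forall>c x y. B (sm c x) y = sm c (B x y)) \<and> (\<forall>c x y. B x (sm c y) = sm c (B x y))"

definition trilinear_op :: "('k::field \<Rightarrow> 'v::ab_group_add \<Rightarrow> 'v) \<Rightarrow> ('v \<Rightarrow> 'v \<Rightarrow> 'v \<Rightarrow> 'v) \<Rightarrow> bool" where
  "trilinear_op sm T \<longleftrightarrow>
     (\<forall>x x' y z. T (x + x') y z = T x y z + T x' y z) \<and>
     (\<forall>x y y' z. T x (y + y') z = T x y z + T x y' z) \<and>
     (\<forall>x y z z'. T x y (z + z') = T x y z + T x y z') \<and>
     (\<forall>c x y z. T (sm c x) y z = sm c (T x y z)) \<and>
     (\<forall>c x y z. T x (sm c y) z = sm c (T x y z)) \<and>
     (\<forall>c x y z. T x y (sm c z) = sm c (T x y z))"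

definition bilinear_form :: "('k::field \<Rightarrow> 'v::ab_group_add \<Rightarrow> 'v) \<Rightarrow> ('v \<Rightarrow> 'v \<Rightarrow> 'k) \<Rightarrow> bool" where
  "bilinear_form sm w \<longleftrightarrow>
     (\<forall>x y z. w (x + y) z = w x z + w y z) \<and> (\<forall>x y z. w x (y + z) = w x y + w x z) \<and>
     (\<forall>c x y. w (sm c x) y = c * w x y) \<and> (\<forall>c x y. w x (sm c y) = c * w x y)"

definition LY_algebra :: "('k::field \<Rightarrow> 'v::ab_group_add \<Rightarrow> 'v) \<Rightarrow> ('v \<Rightarrow> 'v \<Rightarrow> 'v) \<Rightarrow> ('v \<Rightarrow> 'v \<Rightarrow> 'v \<Rightarrow> 'v) \<Rightarrow> bool" where
  "LY_algebra sm B T \<longleftrightarrow>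
     bilinear_op sm B \<and> trilinear_op sm T \<and>
     (\<forall>x y. B x y = - B y x) \<and>
     (\<forall>x y z. T x y z = - T y x z) \<and>
     (\<forall>x y z. B (B x y) z + B (B y z) x + B (B z x) y + T x y z + T y z x + T z x y = 0) \<and>
     (\<forall>x y z w. T (B x y) z w + T (B y z) x w + T (B z x) y w = 0) \<and>
     (\<forall>x y z w. T x y (B z w) = B (T x y z) w + B z (T x y w)) \<and>
     (\<forall>x y z w t. T x y (T z w t) = T (T x y z) w t + T z (T x y w) t + T z w (T x y t))"

definition symplectic_structure :: "('k::field \<Rightarrow> 'v::ab_group_add \<Rightarrow> 'v) \<Rightarrow> ('v \<Rightarrow> 'v \<Rightarrow> 'v) \<Rightarrow> ('v \<Rightarrow> 'v \<Rightarrow> 'v \<Rightarrow> 'v) \<Rightarrow> ('v \<Rightarrow> 'v \<Rightarrow> 'k) \<Rightarrow> bool" where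
  "symplectic_structure sm B T w \<longleftrightarrow>
     bilinear_form sm w \<and>
     (\<forall>x y. w x y = - w y x) \<and>
     (\<forall>x. (\<forall>y. w x y = 0) \<longrightarrow> x = 0) \<and>
     (\<forall>x y z. w x (B y z) + w y (B z x) + w z (B x y) = 0) \<and>
     (\<forall>x y z u. w z (T x y u) - w x (T u z y) + w y (T u z x) - w u (T x y z) = 0)"

text \<open>A finite-dimensional vector space h is modelled as 'n \<Rightarrow> 'k with 'n finite,
its dual h* also as 'n \<Rightarrow> 'k via the standard pairing, and h \<oplus> h* as pairs.\<close>

definition vsm :: "'k::field \<Rightarrow> ('n \<Rightarrow> 'k) \<Rightarrow> ('n \<Rightarrow> 'k)" where
  "vsm c x = (\<lambda>i. c * x i)"

definition psm :: "'k::field \<Rightarrow> ('n \<Rightarrow> 'k) \<times> ('n \<Rightarrow> 'k) \<Rightarrow> ('n \<Rightarrow> 'k) \<times> ('n \<Rightarrow> 'k)" where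
  "psm c p = (vsm c (fst p), vsm c (snd p))"

definition dpair :: "('n::finite \<Rightarrow> 'k::field) \<Rightarrow> ('n \<Rightarrow> 'k) \<Rightarrow> 'k" where
  "dpair \<alpha> x = (\<Sum>i\<in>UNIV. \<alpha> i * x i)"

definition omega_p :: "('n::finite \<Rightarrow> 'k::field) \<times> ('n \<Rightarrow> 'k) \<Rightarrow> ('n \<Rightarrow> 'k) \<times> ('n \<Rightarrow> 'k) \<Rightarrow> 'k" where
  "omega_p X Y = dpair (snd X) (fst Y) - dpair (snd Y) (fst X)"

definition h_part :: "(('n \<Rightarrow> 'k::zero) \<times> ('n \<Rightarrow> 'k)) set" where
  "h_part = {p. snd p = 0}"

definition hdual_part :: "(('n \<Rightarrow> 'k::zero) \<times> ('n \<Rightarrow> 'k)) set" where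
  "hdual_part = {p. fst p = 0}"

definition phase_space ::
  "(('n::finite \<Rightarrow> 'k::field) \<Rightarrow> ('n \<Rightarrow> 'k) \<Rightarrow> ('n \<Rightarrow> 'k)) \<Rightarrow>
   (('n \<Rightarrow> 'k) \<Rightarrow> ('n \<Rightarrow> 'k) \<Rightarrow> ('n \<Rightarrow> 'k) \<Rightarrow> ('n \<Rightarrow> 'k)) \<Rightarrow>
   (('n \<Rightarrow> 'k) \<times> ('n \<Rightarrow> 'k) \<Rightarrow> ('n \<Rightarrow> 'k) \<times> ('n \<Rightarrow> 'k) \<Rightarrow> ('n \<Rightarrow> 'k) \<times> ('n \<Rightarrow> 'k)) \<Rightarrow>
   (('n \<Rightarrow> 'k) \<times> ('n \<Rightarrow> 'k) \<Rightarrow> ('n \<Rightarrow> 'k) \<times> ('n \<Rightarrow> 'k) \<Rightarrow> ('n \<Rightarrow> 'k) \<times> ('n \<Rightarrow> 'k) \<Rightarrow> ('n \<Rightarrow> 'k) \<times> ('n \<Rightarrow> 'k)) \<Rightarrow> bool" where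
  "phase_space Bh Th B T \<longleftrightarrow>
     LY_algebra psm B T \<and> symplectic_structure psm B T omega_p \<and>
     (\<forall>x y. B (x, 0) (y, 0) = (Bh x y, 0)) \<and>
     (\<forall>x y z. T (x, 0) (y, 0) (z, 0) = (Th x y z, 0)) \<and>
     (\<forall>X\<in>hdual_part. \<forall>Y\<in>hdual_part. B X Y \<in> hdual_part) \<and>
     (\<forall>X\<in>hdual_part. \<forall>Y\<in>hdual_part. \<forall>Z\<in>hdual_part. T X Y Z \<in> hdual_part)"

end

theory Submission
  imports Defs
begin

lemma dpair_zero1[simp]: "dpair 0 x = 0" by (simp add: dpair_def)
lemma dpair_zero2[simp]: "dpair a 0 = 0" by (simp add: dpair_def)

lemma dpair_ind1: "dpair a (\<lambda>j. if j = i then 1 else 0) = a i"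
  by (simp add: dpair_def if_distrib cong: if_cong)
lemma dpair_ind2: "dpair (\<lambda>j. if j = i then 1 else 0) x = x i"
proof -
  have "dpair (\<lambda>j. if j = i then 1 else 0) x = (\<Sum>j\<in>UNIV. if j = i then x j else 0)"
    unfolding dpair_def by (rule sum.cong) auto
  then show ?thesis by simp
qed

lemma dpair_nd1: "(\<And>z. dpair a z = 0) \<Longrightarrow> a = 0"
  by (rule ext) (metis dpair_ind1 zero_fun_def)
lemma dpair_nd2: "(\<And>b. dpair b x = 0) \<Longrightarrow> x = 0"
  by (rule ext) (metis dpair_ind2 zero_fun_def)

lemma om_h: "omega_p P (z, 0) = dpair (snd P) z" by (simp add: omega_p_def)
lemma om_d: "omega_p P (0, b) = - dpair b (fst P)" by (simp add: omega_p_def)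

lemma hI_lem:
  fixes P :: "('n::finite \<Rightarrow> 'k::field) \<times> ('n \<Rightarrow> 'k)"
  assumes "\<And>z. omega_p P (z, 0) = 0" shows "P \<in> h_part"
proof -
  have "\<And>z. dpair (snd P) z = 0" using assms by (simp add: om_h)
  then have "snd P = 0" by (rule dpair_nd1)
  then show "P \<in> h_part" by (simp add: h_part_def)
qed

lemma dI_lem:
  fixes P :: "('n::finite \<Rightarrow> 'k::field) \<times> ('n \<Rightarrow> 'k)"
  assumes "\<And>b. omega_p P (0, b) = 0" shows "P \<in> hdual_part"
proof -
  have "\<And>b. dpair b (fst P) = 0" using assms by (simp add: om_d)
  then have "fst P = 0" by (rule dpair_nd2)
  then show "P \<in> hdual_part" by (simp add: hdual_part_def)
qed

theorem corollary4p8: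
  fixes Bh :: "('n::finite \<Rightarrow> 'k::field_char_0) \<Rightarrow> ('n \<Rightarrow> 'k) \<Rightarrow> ('n \<Rightarrow> 'k)"
    and Th :: "('n \<Rightarrow> 'k) \<Rightarrow> ('n \<Rightarrow> 'k) \<Rightarrow> ('n \<Rightarrow> 'k) \<Rightarrow> ('n \<Rightarrow> 'k)"
    and B star :: "('n \<Rightarrow> 'k) \<times> ('n \<Rightarrow> 'k) \<Rightarrow> ('n \<Rightarrow> 'k) \<times> ('n \<Rightarrow> 'k) \<Rightarrow> ('n \<Rightarrow> 'k) \<times> ('n \<Rightarrow> 'k)"
    and T brace :: "('n \<Rightarrow> 'k) \<times> ('n \<Rightarrow> 'k) \<Rightarrow> ('n \<Rightarrow> 'k) \<times> ('n \<Rightarrow> 'k) \<Rightarrow> ('n \<Rightarrow> 'k) \<times> ('n \<Rightarrow> 'k) \<Rightarrow> ('n \<Rightarrow> 'k) \<times> ('n \<Rightarrow> 'k)"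
  assumes hLY: "LY_algebra vsm Bh Th"
    and phase: "phase_space Bh Th B T"
    and star_def: "\<And>X Y Z. omega_p (star X Y) Z = - omega_p Y (B X Z)"
    and brace_def: "\<And>X Y Z W. omega_p (brace X Y Z) W = omega_p X (T W Z Y)"
  shows "(\<forall>X\<in>h_part. \<forall>Y\<in>h_part. star X Y \<in> h_part) \<and>
         (\<forall>X\<in>h_part. \<forall>Y\<in>h_part. \<forall>Z\<in>h_part. brace X Y Z \<in> h_part) \<and>
         (\<forall>X\<in>hdual_part. \<forall>Y\<in>hdual_part. star X Y \<in> hdual_part) \<and>
         (\<forall>X\<in>hdual_part. \<forall>Y\<in>hdual_part. \<forall>Z\<in>hdual_part. brace X Y Z \<in> hdual_part)"
proof -
  have PB: "\<And>x y. B (x, 0) (y, 0) = (Bh x y, 0)"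
   and PT: "\<And>x y z. T (x, 0) (y, 0) (z, 0) = (Th x y z, 0)"
   and DB: "\<And>X Y. X \<in> hdual_part \<Longrightarrow> Y \<in> hdual_part \<Longrightarrow> B X Y \<in> hdual_part"
   and DT: "\<And>X Y Z. X \<in> hdual_part \<Longrightarrow> Y \<in> hdual_part \<Longrightarrow> Z \<in> hdual_part \<Longrightarrow> T X Y Z \<in> hdual_part"
    using phase unfolding phase_space_def by auto
  have hh: "\<And>P Q. P \<in> h_part \<Longrightarrow> Q \<in> h_part \<Longrightarrow> omega_p P Q = 0"
    by (simp add: h_part_def omega_p_def)
  have dd: "\<And>P Q. P \<in> hdual_part \<Longrightarrow> Q \<in> hdual_part \<Longrightarrow> omega_p P Q = 0"
    by (simp add: hdual_part_def omega_p_def)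
  have hform: "\<And>X. X \<in> h_part \<Longrightarrow> X = (fst X, 0)"
    by (simp add: h_part_def prod_eq_iff)
  have hI: "\<And>P. (\<And>z. omega_p P (z, 0) = 0) \<Longrightarrow> P \<in> h_part"
    using hI_lem .
  have dI: "\<And>P. (\<And>b. omega_p P (0, b) = 0) \<Longrightarrow> P \<in> hdual_part"
    using dI_lem .
  have inh: "\<And>x. (x, 0) \<in> h_part" by (simp add: h_part_def)
  have ind: "\<And>b. (0, b) \<in> hdual_part" by (simp add: hdual_part_def)
  have 1: "\<forall>X\<in>h_part. \<forall>Y\<in>h_part. star X Y \<in> h_part"
  proof (intro ballI hI)
    fix X Y :: "('n \<Rightarrow> 'k) \<times> ('n \<Rightarrow> 'k)" and z :: "'n \<Rightarrow> 'k" assume X: "X \<in> h_part" and Y: "Y \<in> h_part"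
    have "B X (z, 0) = (Bh (fst X) z, 0)" using PB hform[OF X] by metis
    then show "omega_p (star X Y) (z, 0) = 0" using star_def hh[OF Y inh] by simp
  qed
  have 2: "\<forall>X\<in>h_part. \<forall>Y\<in>h_part. \<forall>Z\<in>h_part. brace X Y Z \<in> h_part"
  proof (intro ballI hI)
    fix X Y Z :: "('n \<Rightarrow> 'k) \<times> ('n \<Rightarrow> 'k)" and z :: "'n \<Rightarrow> 'k" assume X: "X \<in> h_part" and Y: "Y \<in> h_part" and Z: "Z \<in> h_part"
    have "T (z, 0) Z Y = (Th z (fst Z) (fst Y), 0)" using PT hform[OF Y] hform[OF Z] by metis
    then show "omega_p (brace X Y Z) (z, 0) = 0" using brace_def hh[OF X inh] by simp
  qed
  have 3: "\<forall>X\<in>hdual_part. \<forall>Y\<in>hdual_part. star X Y \<in> hdual_part"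
  proof (intro ballI dI)
    fix X Y :: "('n \<Rightarrow> 'k) \<times> ('n \<Rightarrow> 'k)" and b :: "'n \<Rightarrow> 'k" assume X: "X \<in> hdual_part" and Y: "Y \<in> hdual_part"
    show "omega_p (star X Y) (0, b) = 0" using star_def dd[OF Y DB[OF X ind]] by simp
  qed
  have 4: "\<forall>X\<in>hdual_part. \<forall>Y\<in>hdual_part. \<forall>Z\<in>hdual_part. brace X Y Z \<in> hdual_part"
  proof (intro ballI dI)
    fix X Y Z :: "('n \<Rightarrow> 'k) \<times> ('n \<Rightarrow> 'k)" and b :: "'n \<Rightarrow> 'k" assume X: "X \<in> hdual_part" and Y: "Y \<in> hdual_part" and Z: "Z \<in> hdual_part"
    show "omega_p (brace X Y Z) (0, b) = 0" using brace_def dd[OF X DT[OF ind Z Y]] by simp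
  qed
  show ?thesis using 1 2 3 4 by blast
qed

end
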